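(* Let $(R,d)$ be a finitely generated fusion algebra and let $\rho:\mathcal{C}_R\to B(\ell^2(I))$ be the right regular representation of $\mathcal{C}_R$. Then $\mathrm{F\o l}(R,d)\ge\mathrm{Kaz}(\rho,(R,d))^2$.
   Context: A fusion algebra $(R,d)$ consists of a set $I$ with distinguished $e$ and involution $\alpha\mapsto\bar\alpha$, a unital ring structure on $R=\mathbb{Z}[I]$ with unit $e$ and $\xi\eta=\sum_\alpha N^\alpha_{\xi,\eta}\alpha$, $N^\alpha_{\xi,\eta}\in\mathbb{Z}_{\ge0}$ finitely many nonzero, the involution extending to a $\mathbb{Z}$-linear antimultiplicative involution, Frobenius reciprocity $N^\alpha_{\xi,\eta}=N^\xi_{\alpha,\bar\eta}=N^\eta_{\bar\xi,\alpha}$, and $\mathbb{Z}$-linear multiplicative $d:R\to\mathbb{R}$ with $d(\bar\alpha)=d(\alpha)\ge1$ on $I$. $\mathrm{supp}(r)$: elements of $I$ with nonzero coefficient in $r$. $|A|=\sum_{\alpha\in A}d(\alpha)^2$, $A^c=I\setminus A$. A finite generating set is a finite $X\subseteq I$ with $\bar X=X$ such that each $\alpha\in I$ lies in $\mathrm{supp}(x_1\cdots x_n)$ for some $x_i\in X$; $R$ is finitely generated if one exists. $\partial_X(A)=\{\alpha\in A:\exists x\in X,\ \mathrm{supp}(\alpha x)\not\subseteq A\}\cup\{\alpha\in A^c:\exists x\in X,\ \mathrm{supp}(\alpha x)\not\subseteq A^c\}$; $\mathrm{F\o l}_X(R,d)=\inf_A|\partial_XA|/|A|$ over nonempty finite $A\subseteq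 I$ and $\mathrm{F\o l}(R,d)=\inf_X\mathrm{F\o l}_X(R,d)$ over finite generating sets. $\mathcal{C}_R=\mathbb{C}[I]$ is the complexification of $R$ (a unital $*$-algebra); the right regular representation is $\rho(\alpha)\delta_\beta=\sum_{\eta\in I}N^\eta_{\beta,\bar\alpha}\delta_\eta$. For a unital $*$-representation $\pi$ on $H_\pi$ and a finite generating set $X$, $\mathrm{Kaz}(X,\pi,(R,d))=\inf_{\xi\in H_\pi,\|\xi\|=1}\max_{\alpha\in X}\frac{\|\pi(\alpha)\xi-d(\alpha)\xi\|}{d(\alpha)}$ and $\mathrm{Kaz}(\pi,(R,d))=\inf_X\mathrm{Kaz}(X,\pi,(R,d))$ over finite generating sets. *)

theory Defs
  imports "HOL-Analysis.Analysis"
begin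

text \<open>A fusion algebra on the index set I = the type 'i.  The structure constants are
  N a x y = N^a_{x,y}, i.e. x y = sum_a N^a_{x,y} a.  e is the unit, bar the involution,
  d the dimension function (its Z-linear extension to R = Z[I] is determined by its values on I).\<close>

definition fusion_algebra ::
  "'i \<Rightarrow> ('i \<Rightarrow> 'i) \<Rightarrow> ('i \<Rightarrow> 'i \<Rightarrow> 'i \<Rightarrow> nat) \<Rightarrow> ('i \<Rightarrow> real) \<Rightarrow> bool" where
  "fusion_algebra e bar N d \<longleftrightarrow>
     (\<forall>a. bar (bar a) = a) \<and>
     (\<forall>x y. finite {a. N a x y \<noteq> 0}) \<and>
     (\<forall>a x. N a e x = (if a = x then 1 else 0) \<and> N a x e = (if a = x then 1 else 0)) \<and>
     (\<forall>a x y z. (\<Sum>b\<in>{b. N b x y \<noteq> 0}. N b x y * N a b z)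
              = (\<Sum>b\<in>{b. N b y z \<noteq> 0}. N b y z * N a x b)) \<and>
     (\<forall>a x y. N (bar a) (bar y) (bar x) = N a x y) \<and>
     (\<forall>a x y. N a x y = N x a (bar y) \<and> N a x y = N y (bar x) a) \<and>
     (\<forall>x y. d x * d y = (\<Sum>a\<in>{a. N a x y \<noteq> 0}. real (N a x y) * d a)) \<and>
     (\<forall>a. d (bar a) = d a \<and> d a \<ge> 1)"

text \<open>Coefficient function of the product x_1 x_2 ... x_n of basis elements.\<close>
primrec fus_word :: "('i \<Rightarrow> 'i \<Rightarrow> 'i \<Rightarrow> nat) \<Rightarrow> 'i \<Rightarrow> 'i list \<Rightarrow> 'i \<Rightarrow> nat" where
  "fus_word N e [] = (\<lambda>a. if a = e then 1 else 0)"
| "fus_word N e (x # xs) =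
     (\<lambda>a. \<Sum>b\<in>{b. fus_word N e xs b \<noteq> 0}. N a x b * fus_word N e xs b)"

definition gen_set ::
  "'i \<Rightarrow> ('i \<Rightarrow> 'i) \<Rightarrow> ('i \<Rightarrow> 'i \<Rightarrow> 'i \<Rightarrow> nat) \<Rightarrow> 'i set \<Rightarrow> bool" where
  "gen_set e bar N X \<longleftrightarrow> finite X \<and> bar ` X = X \<and>
     (\<forall>a. \<exists>xs. xs \<noteq> [] \<and> set xs \<subseteq> X \<and> fus_word N e xs a \<noteq> 0)"

definition finitely_generated ::
  "'i \<Rightarrow> ('i \<Rightarrow> 'i) \<Rightarrow> ('i \<Rightarrow> 'i \<Rightarrow> 'i \<Rightarrow> nat) \<Rightarrow> bool" where
  "finitely_generated e bar N \<longleftrightarrow> (\<exists>X. gen_set e bar N X)"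

definition fweight :: "('i \<Rightarrow> real) \<Rightarrow> 'i set \<Rightarrow> real" where
  "fweight d A = (\<Sum>a\<in>A. (d a)^2)"

definition fboundary :: "('i \<Rightarrow> 'i \<Rightarrow> 'i \<Rightarrow> nat) \<Rightarrow> 'i set \<Rightarrow> 'i set \<Rightarrow> 'i set" where
  "fboundary N X A =
     {a\<in>A. \<exists>x\<in>X. \<not> {b. N b a x \<noteq> 0} \<subseteq> A} \<union>
     {a\<in>-A. \<exists>x\<in>X. \<not> {b. N b a x \<noteq> 0} \<subseteq> -A}"

definition fol_X :: "('i \<Rightarrow> 'i \<Rightarrow> 'i \<Rightarrow> nat) \<Rightarrow> ('i \<Rightarrow> real) \<Rightarrow> 'i set \<Rightarrow> real" where
  "fol_X N d X = Inf ((\<lambda>A. fweight d (fboundary N X A) / fweight d A) ` {A. A \<noteq> {} \<and> finite A})"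

definition fol :: "'i \<Rightarrow> ('i \<Rightarrow> 'i) \<Rightarrow> ('i \<Rightarrow> 'i \<Rightarrow> 'i \<Rightarrow> nat) \<Rightarrow> ('i \<Rightarrow> real) \<Rightarrow> real" where
  "fol e bar N d = Inf (fol_X N d ` {X. gen_set e bar N X})"

definition is_l2 :: "('i \<Rightarrow> complex) \<Rightarrow> bool" where
  "is_l2 f \<longleftrightarrow> (\<lambda>i. (cmod (f i))^2) summable_on UNIV"

definition l2norm :: "('i \<Rightarrow> complex) \<Rightarrow> real" where
  "l2norm f = sqrt (infsum (\<lambda>i. (cmod (f i))^2) UNIV)"

text \<open>Right regular representation on basis elements a:
  rho(a) delta_b = sum_eta N^eta_{b, bar a} delta_eta, so
  (rho(a) f)(eta) = sum_b N^eta_{b, bar a} f(b) (a finite sum).\<close>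
definition rho :: "('i \<Rightarrow> 'i) \<Rightarrow> ('i \<Rightarrow> 'i \<Rightarrow> 'i \<Rightarrow> nat) \<Rightarrow> 'i \<Rightarrow> ('i \<Rightarrow> complex) \<Rightarrow> 'i \<Rightarrow> complex" where
  "rho bar N a f = (\<lambda>\<eta>. \<Sum>b\<in>{b. N \<eta> b (bar a) \<noteq> 0}. of_nat (N \<eta> b (bar a)) * f b)"

definition kaz_X ::
  "('i \<Rightarrow> 'i) \<Rightarrow> ('i \<Rightarrow> 'i \<Rightarrow> 'i \<Rightarrow> nat) \<Rightarrow> ('i \<Rightarrow> real) \<Rightarrow> 'i set \<Rightarrow> real" where
  "kaz_X bar N d X = Inf ((\<lambda>f. Max ((\<lambda>a. l2norm (\<lambda>i. rho bar N a f i - complex_of_real (d a) * f i) / d a) ` X))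
                         ` {f. is_l2 f \<and> l2norm f = 1})"

definition kaz_rho ::
  "'i \<Rightarrow> ('i \<Rightarrow> 'i) \<Rightarrow> ('i \<Rightarrow> 'i \<Rightarrow> 'i \<Rightarrow> nat) \<Rightarrow> ('i \<Rightarrow> real) \<Rightarrow> real" where
  "kaz_rho e bar N d = Inf (kaz_X bar N d ` {X. gen_set e bar N X})"

end

theory Submission
  imports Defs
begin

lemma l2_fin:
  assumes "finite B" and "\<And>i. i \<notin> B \<Longrightarrow> f i = 0"
  shows "is_l2 f \<and> l2norm f = sqrt (\<Sum>i\<in>B. (cmod (f i))^2)"
proof -
  have s: "(\<lambda>i. (cmod (f i))^2) summable_on UNIV"
    using summable_on_cong_neutral[of UNIV B "\<lambda>i. (cmod (f i))^2" "\<lambda>i. (cmod (f i))^2"] assms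
    by (simp add: summable_on_finite)
  have "infsum (\<lambda>i. (cmod (f i))^2) UNIV = infsum (\<lambda>i. (cmod (f i))^2) B"
    by (rule infsum_cong_neutral) (use assms in auto)
  then show ?thesis using s assms(1) by (simp add: is_l2_def l2norm_def)
qed

lemma key:
  assumes fa: "fusion_algebra e bar N d" and gX: "gen_set e bar N X"
    and fA: "finite A" and nA: "A \<noteq> {}"
  shows "(kaz_X bar N d X)^2 \<le> fweight d (fboundary N X A) / fweight d A"
proof -
  have bb: "\<And>a. bar (bar a) = a" using fa unfolding fusion_algebra_def by blast
  have fs: "\<And>x y. finite {a. N a x y \<noteq> 0}" using fa unfolding fusion_algebra_def by blast
  have fr: "\<And>a x y. N a x y = N x a (bar y)" using fa unfolding fusion_algebra_def by blast
  have dp: "\<And>x y. d x * d y = (\<Sum>a\<in>{a. N a x y \<noteq> 0}. real (N a x y) * d a)"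
    using fa unfolding fusion_algebra_def by blast
  have d1: "\<And>a. d a \<ge> 1" using fa unfolding fusion_algebra_def by blast
  have fX: "finite X" using gX unfolding gen_set_def by blast
  obtain xs0 where "xs0 \<noteq> []" "set xs0 \<subseteq> X" using gX unfolding gen_set_def by blast
  then have neX: "X \<noteq> {}" by auto
  define D where "D = fweight d A"
  have Dpos: "D > 0" unfolding D_def fweight_def
  proof -
    obtain a where "a \<in> A" using nA by auto
    have "0 < (d a)^2" using d1[of a] by simp
    also have "\<dots> \<le> (\<Sum>a\<in>A. (d a)^2)"
      using member_le_sum[of a A "\<lambda>a. (d a)^2"] \<open>a \<in> A\<close> fA by simp
    finally show "0 < (\<Sum>a\<in>A. (d a)^2)" .
  qed
  define B where "B = fboundary N X A"
  define W where "W = fweight d B"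
  define h where "h = (\<lambda>b. (if b \<in> A then d b else 0) / sqrt D)"
  define f where "f = (\<lambda>b. complex_of_real (h b))"
  define S where "S = (\<lambda>\<eta> x. {b. N b \<eta> x \<noteq> 0})"
  define r where "r = (\<lambda>x \<eta>. \<Sum>b\<in>S \<eta> x. real (N b \<eta> x) * h b)"
  have sqD: "sqrt D > 0" using Dpos by simp
  have hnn: "\<And>b. 0 \<le> h b" unfolding h_def using d1 sqD
    by (smt (verit) divide_nonneg_pos)
  have hle: "\<And>b. h b \<le> d b / sqrt D"
  proof -
    fix b
    have "0 \<le> d b / sqrt D" using d1[of b] sqD by simp
    then show "h b \<le> d b / sqrt D" unfolding h_def by auto
  qed
  have rho_eq: "\<And>x \<eta>. rho bar N x f \<eta> = complex_of_real (r x \<eta>)"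
  proof -
    fix x \<eta>
    have e1: "\<And>b. N \<eta> b (bar x) = N b \<eta> x" using fr bb by metis
    show "rho bar N x f \<eta> = complex_of_real (r x \<eta>)"
      unfolding rho_def r_def S_def f_def e1 by simp
  qed
  have rfull: "\<And>x \<eta>. (\<Sum>b\<in>S \<eta> x. real (N b \<eta> x) * (d b / sqrt D)) = d \<eta> * d x / sqrt D"
  proof -
    fix x \<eta>
    have "(\<Sum>b\<in>S \<eta> x. real (N b \<eta> x) * (d b / sqrt D)) = (\<Sum>b\<in>S \<eta> x. real (N b \<eta> x) * d b) / sqrt D"
      by (simp add: sum_divide_distrib)
    also have "\<dots> = d \<eta> * d x / sqrt D" using dp[of \<eta> x] unfolding S_def by simp
    finally show "?thesis x \<eta>" .
  qed
  have rnn: "\<And>x \<eta>. 0 \<le> r x \<eta>" unfolding r_def using hnn by (simp add: sum_nonneg)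
  have rle: "\<And>x \<eta>. r x \<eta> \<le> d \<eta> * d x / sqrt D"
  proof -
    fix x \<eta>
    have "r x \<eta> \<le> (\<Sum>b\<in>S \<eta> x. real (N b \<eta> x) * (d b / sqrt D))"
      unfolding r_def by (rule sum_mono) (metis hle mult_left_mono of_nat_0_le_iff times_divide_eq_right)
    then show "?thesis x \<eta>" using rfull by simp
  qed
  have diffb: "\<And>x \<eta>. \<bar>r x \<eta> - d x * h \<eta>\<bar> \<le> d x * d \<eta> / sqrt D"
  proof -
    fix x \<eta>
    have a: "0 \<le> d x * h \<eta>" using hnn d1[of x] by simp
    have b: "d x * h \<eta> \<le> d x * (d \<eta> / sqrt D)" using hle[of \<eta>] d1[of x] by (intro mult_left_mono) auto
    have c: "d x * (d \<eta> / sqrt D) = d x * d \<eta> / sqrt D" by simp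
    have c2: "d \<eta> * d x / sqrt D = d x * d \<eta> / sqrt D" by (simp add: mult.commute)
    have r1: "0 \<le> r x \<eta>" by (rule rnn)
    have r2: "r x \<eta> \<le> d x * d \<eta> / sqrt D" using rle[of x \<eta>] c2 by simp
    have b2: "d x * h \<eta> \<le> d x * d \<eta> / sqrt D" using b c by simp
    show "?thesis x \<eta>" unfolding abs_le_iff using a b2 r1 r2 by auto
  qed
  have van: "\<And>x \<eta>. x \<in> X \<Longrightarrow> \<eta> \<notin> B \<Longrightarrow> r x \<eta> - d x * h \<eta> = 0"
  proof -
    fix x \<eta> assume xX: "x \<in> X" and nB: "\<eta> \<notin> B"
    show "r x \<eta> - d x * h \<eta> = 0"
    proof (cases "\<eta> \<in> A")
      case True
      then have sub: "S \<eta> x \<subseteq> A" using nB xX unfolding B_def fboundary_def S_def by blast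
      have "r x \<eta> = (\<Sum>b\<in>S \<eta> x. real (N b \<eta> x) * (d b / sqrt D))"
        unfolding r_def by (rule sum.cong) (use sub in \<open>auto simp: h_def\<close>)
      then show ?thesis using rfull True by (simp add: h_def)
    next
      case False
      then have sub: "S \<eta> x \<subseteq> -A" using nB xX unfolding B_def fboundary_def S_def by blast
      have "r x \<eta> = 0"
        unfolding r_def by (rule sum.neutral) (use sub in \<open>auto simp: h_def\<close>)
      then show ?thesis using False by (simp add: h_def)
    qed
  qed
  have fB: "finite B"
  proof -
    have "B \<subseteq> A \<union> (\<Union>x\<in>X. \<Union>b\<in>A. {\<eta>. N \<eta> b (bar x) \<noteq> 0})"
    proof
      fix \<eta> assume "\<eta> \<in> B"
      show "\<eta> \<in> A \<union> (\<Union>x\<in>X. \<Union>b\<in>A. {\<eta>. N \<eta> b (bar x) \<noteq> 0})"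
      proof (cases "\<eta> \<in> A")
        case False
        then obtain x b where "x \<in> X" "N b \<eta> x \<noteq> 0" "b \<in> A"
          using \<open>\<eta> \<in> B\<close> unfolding B_def fboundary_def by blast
        moreover have "N b \<eta> x = N \<eta> b (bar x)" by (rule fr)
        ultimately show ?thesis by auto
      qed simp

    qed
    moreover have "finite (A \<union> (\<Union>x\<in>X. \<Union>b\<in>A. {\<eta>. N \<eta> b (bar x) \<noteq> 0}))"
      using fA fX fs by auto
    ultimately show ?thesis by (rule finite_subset)
  qed
  have fnorm: "is_l2 f \<and> l2norm f = 1"
  proof -
    have "is_l2 f \<and> l2norm f = sqrt (\<Sum>i\<in>A. (cmod (f i))^2)"
      by (rule l2_fin[OF fA]) (simp add: f_def h_def)
    moreover have "(\<Sum>i\<in>A. (cmod (f i))^2) = (\<Sum>i\<in>A. (d i)^2) / D"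
      unfolding sum_divide_distrib
      proof (rule sum.cong)
      fix i assume "i \<in> A"
      then have "cmod (f i) = \<bar>d i / sqrt D\<bar>" by (simp add: f_def h_def del: of_real_divide)
      then have "(cmod (f i))^2 = (d i / sqrt D)^2" by (simp only: power2_abs)
      also have "\<dots> = (d i)^2 / D" using Dpos by (simp add: power_divide)
      finally show "(cmod (f i))^2 = (d i)^2 / D" .
    qed simp
    ultimately show ?thesis using Dpos unfolding D_def fweight_def by simp
  qed
  define val where "val = (\<lambda>g. Max ((\<lambda>a. l2norm (\<lambda>i. rho bar N a g i - complex_of_real (d a) * g i) / d a) ` X))"
  have each: "\<And>x. x \<in> X \<Longrightarrow> l2norm (\<lambda>i. rho bar N x f i - complex_of_real (d x) * f i) / d x \<le> sqrt (W / D)"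
  proof -
    fix x assume xX: "x \<in> X"
    have eqg: "(\<lambda>i. rho bar N x f i - complex_of_real (d x) * f i) = (\<lambda>i. complex_of_real (r x i - d x * h i))"
      unfolding rho_eq by (simp add: f_def)
    have "l2norm (\<lambda>i. complex_of_real (r x i - d x * h i)) = sqrt (\<Sum>i\<in>B. (cmod (complex_of_real (r x i - d x * h i)))^2)"
      using l2_fin[OF fB, of "\<lambda>i. complex_of_real (r x i - d x * h i)"] van[OF xX] by simp
    also have "\<dots> = sqrt (\<Sum>i\<in>B. (r x i - d x * h i)^2)"
      by (simp only: norm_of_real power2_abs)
    also have "\<dots> \<le> sqrt (\<Sum>i\<in>B. (d x * d i / sqrt D)^2)"
    proof (rule real_sqrt_le_mono, rule sum_mono)
      fix i
      have "\<bar>r x i - d x * h i\<bar>^2 \<le> (d x * d i / sqrt D)^2"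
        using diffb[of x i] by (rule power_mono) simp
      then show "(r x i - d x * h i)^2 \<le> (d x * d i / sqrt D)^2" by simp
    qed
    also have "(\<Sum>i\<in>B. (d x * d i / sqrt D)^2) = (d x)^2 * (W / D)"
      using Dpos unfolding W_def fweight_def
      by (simp add: power_mult_distrib power_divide sum_distrib_left sum_divide_distrib)
    also have "sqrt ((d x)^2 * (W / D)) = d x * sqrt (W / D)"
      using d1[of x] by (subst real_sqrt_mult) simp
    finally have "l2norm (\<lambda>i. rho bar N x f i - complex_of_real (d x) * f i) \<le> d x * sqrt (W / D)"
      using eqg by simp
    then show "l2norm (\<lambda>i. rho bar N x f i - complex_of_real (d x) * f i) / d x \<le> sqrt (W / D)"
      using d1[of x] by (simp add: divide_le_eq mult.commute)
  qed
  have valf: "val f \<le> sqrt (W / D)"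
    unfolding val_def using fX neX each by (subst Max_le_iff) auto
  have valnn: "\<And>g. 0 \<le> val g"
  proof -
    fix g
    obtain x where xX: "x \<in> X" using neX by auto
    have "0 \<le> l2norm (\<lambda>i. rho bar N x g i - complex_of_real (d x) * g i) / d x"
      using d1[of x] by (simp add: l2norm_def infsum_nonneg)
    also have "\<dots> \<le> val g" unfolding val_def using fX xX by (intro Max_ge) auto
    finally show "0 \<le> val g" .
  qed
  have kX: "kaz_X bar N d X = Inf (val ` {f. is_l2 f \<and> l2norm f = 1})"
    unfolding kaz_X_def val_def by simp
  have k1: "kaz_X bar N d X \<le> sqrt (W / D)"
    unfolding kX
    by (rule order_trans[OF cInf_lower valf]) (use fnorm valnn in \<open>auto simp: bdd_below_def\<close>)
  have k0: "0 \<le> kaz_X bar N d X"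
    unfolding kX by (rule cInf_greatest) (use fnorm valnn in auto)
  have "(kaz_X bar N d X)^2 \<le> (sqrt (W / D))^2" using k1 k0 by (rule power_mono)
  also have "\<dots> = W / D" using Dpos unfolding W_def fweight_def
    by (simp add: sum_nonneg)
  finally show ?thesis unfolding W_def D_def B_def .
qed

lemma kaz_nn:
  fixes e :: 'i and bar :: "'i \<Rightarrow> 'i" and N :: "'i \<Rightarrow> 'i \<Rightarrow> 'i \<Rightarrow> nat" and d :: "'i \<Rightarrow> real"
  assumes fa: "fusion_algebra e bar N d" and gX: "gen_set e bar N X"
  shows "0 \<le> kaz_X bar N d X"
proof -
  have d1: "\<And>a. d a \<ge> 1" using fa unfolding fusion_algebra_def by blast
  have fX: "finite X" using gX unfolding gen_set_def by blast
  obtain xs0 where "xs0 \<noteq> []" "set xs0 \<subseteq> X" using gX unfolding gen_set_def by blast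
  then have neX: "X \<noteq> {}" by auto
  define val where "val = (\<lambda>g. Max ((\<lambda>a. l2norm (\<lambda>i. rho bar N a g i - complex_of_real (d a) * g i) / d a) ` X))"
  have valnn: "\<And>g. 0 \<le> val g"
  proof -
    fix g
    obtain x where xX: "x \<in> X" using neX by auto
    have "0 \<le> l2norm (\<lambda>i. rho bar N x g i - complex_of_real (d x) * g i) / d x"
      using d1[of x] by (simp add: l2norm_def infsum_nonneg)
    also have "\<dots> \<le> val g" unfolding val_def using fX xX by (intro Max_ge) auto
    finally show "0 \<le> val g" .
  qed
  have ne: "{f :: 'i \<Rightarrow> complex. is_l2 f \<and> l2norm f = 1} \<noteq> {}"
  proof -
    have "is_l2 (\<lambda>i. if i = e then 1 else 0) \<and> l2norm (\<lambda>i::'i. if i = e then (1::complex) else 0) = sqrt (\<Sum>i\<in>{e}. (cmod (if i = e then (1::complex) else 0))^2)"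
      by (rule l2_fin) auto
    then have "(\<lambda>i. if i = e then (1::complex) else 0) \<in> {f. is_l2 f \<and> l2norm f = 1}" by simp
    then show ?thesis by blast
  qed
  have kX: "kaz_X bar N d X = Inf (val ` {f. is_l2 f \<and> l2norm f = 1})"
    unfolding kaz_X_def val_def by simp
  show ?thesis unfolding kX by (rule cInf_greatest) (use ne valnn in auto)
qed

theorem proposition3p21:
  fixes e :: 'i and bar :: "'i \<Rightarrow> 'i" and N :: "'i \<Rightarrow> 'i \<Rightarrow> 'i \<Rightarrow> nat" and d :: "'i \<Rightarrow> real"
  assumes "fusion_algebra e bar N d"
    and "finitely_generated e bar N"
  shows "fol e bar N d \<ge> (kaz_rho e bar N d)^2"
proof -
  note fa = assms(1)
  have neG: "{X. gen_set e bar N X} \<noteq> {}" using assms(2) unfolding finitely_generated_def by auto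
  have k0: "0 \<le> kaz_rho e bar N d"
    unfolding kaz_rho_def
  proof (rule cInf_greatest)
    show "kaz_X bar N d ` {X. gen_set e bar N X} \<noteq> {}" using neG by blast
  next
    fix y assume "y \<in> kaz_X bar N d ` {X. gen_set e bar N X}"
    then obtain X where "gen_set e bar N X" "y = kaz_X bar N d X" by blast
    then show "0 \<le> y" using kaz_nn[OF fa] by simp
  qed
  have kle: "\<And>X. gen_set e bar N X \<Longrightarrow> kaz_rho e bar N d \<le> kaz_X bar N d X"
  proof -
    fix X assume g: "gen_set e bar N X"
    have "bdd_below (kaz_X bar N d ` {X. gen_set e bar N X})"
      unfolding bdd_below_def using kaz_nn[OF fa] by blast
    then show "kaz_rho e bar N d \<le> kaz_X bar N d X"
      unfolding kaz_rho_def using g by (intro cInf_lower) auto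
  qed
  have fX: "\<And>X. gen_set e bar N X \<Longrightarrow> (kaz_rho e bar N d)^2 \<le> fol_X N d X"
  proof -
    fix X assume g: "gen_set e bar N X"
    have "(kaz_rho e bar N d)^2 \<le> (kaz_X bar N d X)^2"
      using kle[OF g] k0 by (rule power_mono)
    moreover have "(kaz_X bar N d X)^2 \<le> fol_X N d X"
      unfolding fol_X_def
    proof (rule cInf_greatest)
      show "(\<lambda>A. fweight d (fboundary N X A) / fweight d A) ` {A. A \<noteq> {} \<and> finite A} \<noteq> {}"
        by blast
    next
      fix y assume "y \<in> (\<lambda>A. fweight d (fboundary N X A) / fweight d A) ` {A. A \<noteq> {} \<and> finite A}"
      then obtain A where "A \<noteq> {}" "finite A" "y = fweight d (fboundary N X A) / fweight d A" by blast
      then show "(kaz_X bar N d X)^2 \<le> y" using key[OF fa g, of A] by simp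
    qed
    ultimately show "(kaz_rho e bar N d)^2 \<le> fol_X N d X" by linarith
  qed
  show ?thesis unfolding fol_def
  proof (rule cInf_greatest)
    show "fol_X N d ` {X. gen_set e bar N X} \<noteq> {}" using neG by blast
  next
    fix y assume "y \<in> fol_X N d ` {X. gen_set e bar N X}"
    then obtain X where "gen_set e bar N X" "y = fol_X N d X" by blast
    then show "(kaz_rho e bar N d)^2 \<le> y" using fX by simp
  qed
qed

end
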